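(* Let $Z_1,\ldots,Z_{n+1}$ be i.i.d. from an arbitrary distribution $\mathcal P$, let $V$ be a fixed score function and $\alpha\in(0,1)$. Let $\tilde\alpha=A(Z_1,\ldots,Z_n,X_{n+1})\in[0,1]$, where $A$ is a fixed deterministic rule (the same for every input, invariant under permutations of its first $n$ arguments) such that for every input, with $\bar v^*:=Q(\tilde\alpha;\hat{\mathcal F})$, $$v^*_{i1}:=Q\Big(\tilde\alpha;\sum_{j=1}^n p^H_{i,j}\delta_{V_j}+p^H_{i,n+1}\delta_{\bar v^*}\Big),\qquad v^*_{i2}:=Q\Big(\tilde\alpha;\sum_{j=1}^n p^H_{i,j}\delta_{V_j}+p^H_{i,n+1}\delta_{0}\Big),$$ either $\bar v^*=\infty$ or $$\text{(G2)}\qquad \frac{1}{n+1}\sum_{i=1}^n\mathbb 1\{V_i\le v^*_{i1}\}\ge\alpha\quad\text{and}\quad \frac{1}{n+1}\sum_{i=1}^n\mathbb 1\{V_i\le v^*_{i2}\}+\frac{1}{n+1}\ge\alpha.$$ Then $\mathbb P\{V_{n+1}\le Q(\tilde\alpha;\hat{\mathcal F})\}\ge\alpha$.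
   Context: Data: $Z_i=(X_i,Y_i)\in\mathbb R^p\times\mathbb R$, $i=1,\ldots,n+1$; $X=\{X_1,\ldots,X_{n+1}\}$ (unordered). A localizer is a function $H(x_1,x_2,X)\in[0,1]$ of $x_1,x_2\in\mathbb R^p$ and of the unordered set $X$, satisfying $H(x,x,X)=1$ for all $x$. Write $H_{i,j}=H(X_i,X_j,X)$ and $p^H_{i,j}=H_{i,j}/\sum_{k=1}^{n+1}H_{i,k}$. For a probability distribution $\mathcal F$ on $\mathbb R\cup\{\infty\}$ and $a\in[0,1]$, $Q(a;\mathcal F)=\inf\{t:\mathbb P_{T\sim\mathcal F}(T\le t)\ge a\}$; $\delta_v$ denotes the point mass at $v$. A fixed score function is a deterministic measurable $V:\mathbb R^p\times\mathbb R\to[0,\infty)$ not depending on the data; $V_i=V(Z_i)$. Define $\hat{\mathcal F}=\sum_{j=1}^{n}p^H_{n+1,j}\delta_{V_j}+p^H_{n+1,n+1}\delta_{\infty}$ (note that $\hat{\mathcal F}$, $\bar v^*$, $v^*_{i1}$, $v^*_{i2}$ do not depend on $Y_{n+1}$). *)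

theory Defs
  imports "HOL-Probability.Probability" "HOL-Library.Multiset"
begin

text \<open>Data are indexed by \<open>i = 1..n+1\<close>; a data configuration is
  \<open>\<omega> :: nat \<Rightarrow> 'x \<times> real\<close> with \<open>Z_i = \<omega> i\<close>, \<open>X_i = fst (\<omega> i)\<close>.\<close>

definition Xset :: "nat \<Rightarrow> (nat \<Rightarrow> 'x \<times> real) \<Rightarrow> 'x multiset" where
  "Xset n \<omega> = image_mset (\<lambda>i. fst (\<omega> i)) (mset_set {1..n+1})"

text \<open>The training data \<open>Z_1,...,Z_n\<close> as a multiset (input of a
  permutation-invariant rule).\<close>
definition Ztrain :: "nat \<Rightarrow> (nat \<Rightarrow> 'x \<times> real) \<Rightarrow> ('x \<times> real) multiset" where
  "Ztrain n \<omega> = image_mset \<omega> (mset_set {1..n})"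

definition Hij :: "('x \<Rightarrow> 'x \<Rightarrow> 'x multiset \<Rightarrow> real) \<Rightarrow> nat \<Rightarrow> (nat \<Rightarrow> 'x \<times> real) \<Rightarrow> nat \<Rightarrow> nat \<Rightarrow> real" where
  "Hij H n \<omega> i j = H (fst (\<omega> i)) (fst (\<omega> j)) (Xset n \<omega>)"

definition pH :: "('x \<Rightarrow> 'x \<Rightarrow> 'x multiset \<Rightarrow> real) \<Rightarrow> nat \<Rightarrow> (nat \<Rightarrow> 'x \<times> real) \<Rightarrow> nat \<Rightarrow> nat \<Rightarrow> real" where
  "pH H n \<omega> i j = Hij H n \<omega> i j / (\<Sum>k\<in>{1..n+1}. Hij H n \<omega> i k)"

text \<open>Quantile \<open>Q(a; F) = inf {t : P_{T~F}(T \<le> t) \<ge> a}\<close> of the discrete distribution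
  \<open>F = \<Sum>_{k\<in>I} w k \<delta>_{v k}\<close> on \<open>\<real> \<union> {\<infinity>}\<close> (values taken in \<open>ereal\<close>).\<close>
definition quantile :: "real \<Rightarrow> 'i set \<Rightarrow> ('i \<Rightarrow> real) \<Rightarrow> ('i \<Rightarrow> ereal) \<Rightarrow> ereal" where
  "quantile a I w v = Inf {t :: ereal. a \<le> (\<Sum>k\<in>I. if v k \<le> t then w k else 0)}"

definition vbar :: "('x \<Rightarrow> 'x \<Rightarrow> 'x multiset \<Rightarrow> real) \<Rightarrow> ('x \<times> real \<Rightarrow> real) \<Rightarrow> nat
    \<Rightarrow> (nat \<Rightarrow> 'x \<times> real) \<Rightarrow> real \<Rightarrow> ereal" where
  "vbar H V n \<omega> a = quantile a {1..n+1} (pH H n \<omega> (n+1))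
      (\<lambda>j. if j = n+1 then \<infinity> else ereal (V (\<omega> j)))"

definition vstar :: "('x \<Rightarrow> 'x \<Rightarrow> 'x multiset \<Rightarrow> real) \<Rightarrow> ('x \<times> real \<Rightarrow> real) \<Rightarrow> nat
    \<Rightarrow> (nat \<Rightarrow> 'x \<times> real) \<Rightarrow> real \<Rightarrow> nat \<Rightarrow> ereal \<Rightarrow> ereal" where
  "vstar H V n \<omega> a i c = quantile a {1..n+1} (pH H n \<omega> i)
      (\<lambda>j. if j = n+1 then c else ereal (V (\<omega> j)))"

definition G2 :: "('x \<Rightarrow> 'x \<Rightarrow> 'x multiset \<Rightarrow> real) \<Rightarrow> ('x \<times> real \<Rightarrow> real) \<Rightarrow> nat
    \<Rightarrow> (nat \<Rightarrow> 'x \<times> real) \<Rightarrow> real \<Rightarrow> real \<Rightarrow> bool" where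
  "G2 H V n \<omega> a \<alpha> \<longleftrightarrow>
     (let vb = vbar H V n \<omega> a in
       1 / real (n+1) * (\<Sum>i\<in>{1..n}. if ereal (V (\<omega> i)) \<le> vstar H V n \<omega> a i vb then 1 else 0) \<ge> \<alpha>
     \<and> 1 / real (n+1) * (\<Sum>i\<in>{1..n}. if ereal (V (\<omega> i)) \<le> vstar H V n \<omega> a i 0 then 1 else 0)
         + 1 / real (n+1) \<ge> \<alpha>)"

end

theory Submission imports Defs begin

lemma quantile_ge_iff:
  fixes x :: ereal
  assumes fin: "finite I" and w: "\<And>k. k \<in> I \<Longrightarrow> 0 \<le> w k" and x: "x \<noteq> -\<infinity>"
  shows "x \<le> quantile a I w v \<longleftrightarrow> (\<Sum>k\<in>I. if v k < x then w k else 0) < a"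
proof
  assume h: "x \<le> quantile a I w v"
  show "(\<Sum>k\<in>I. if v k < x then w k else 0) < a"
  proof (rule ccontr)
    assume "\<not> ?thesis"
    hence aL: "a \<le> (\<Sum>k\<in>I. if v k < x then w k else 0)" by simp
    define t where "t = Max (insert (-\<infinity>) (v ` {k\<in>I. v k < x}))"
    have finS: "finite (insert (-\<infinity>) (v ` {k\<in>I. v k < x}))" using fin by simp
    have tx: "t < x"
      unfolding t_def using finS x by (subst Max_less_iff) (auto simp: ereal_MInfty_lessI)
    have "(\<Sum>k\<in>I. if v k < x then w k else 0) \<le> (\<Sum>k\<in>I. if v k \<le> t then w k else 0)"
    proof (rule sum_mono)
      fix k assume k: "k \<in> I"
      show "(if v k < x then w k else 0) \<le> (if v k \<le> t then w k else 0)"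
      proof (cases "v k < x")
        case True
        hence "v k \<le> t" unfolding t_def using finS k by (intro Max_ge) auto
        thus ?thesis using True by simp
      next
        case False thus ?thesis using w k by simp
      qed
    qed
    hence "t \<in> {t. a \<le> (\<Sum>k\<in>I. if v k \<le> t then w k else 0)}" using aL by simp
    hence "quantile a I w v \<le> t" unfolding quantile_def by (rule Inf_lower)
    thus False using h tx by simp
  qed
next
  assume h: "(\<Sum>k\<in>I. if v k < x then w k else 0) < a"
  show "x \<le> quantile a I w v" unfolding quantile_def
  proof (rule Inf_greatest)
    fix t assume t: "t \<in> {t. a \<le> (\<Sum>k\<in>I. if v k \<le> t then w k else 0)}"
    show "x \<le> t"
    proof (rule ccontr)
      assume "\<not> x \<le> t"
      hence tx: "t < x" by simp
      have "(\<Sum>k\<in>I. if v k \<le> t then w k else 0) \<le> (\<Sum>k\<in>I. if v k < x then w k else 0)"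
        by (rule sum_mono) (use w tx in auto)
      thus False using t h by simp
    qed
  qed
qed

lemma count_lemma:
  fixes L :: "nat \<Rightarrow> real" and c :: real
  assumes fin: "finite K" and c: "c \<le> real (card K)"
  shows "c \<le> real (card {i\<in>K. real (card {k\<in>K. L k < L i}) < c})"
proof (cases "{i\<in>K. \<not> real (card {k\<in>K. L k < L i}) < c} = {}")
  case True
  hence "{i\<in>K. real (card {k\<in>K. L k < L i}) < c} = K" by auto
  thus ?thesis using c by simp
next
  case False
  define U where "U = {i\<in>K. \<not> real (card {k\<in>K. L k < L i}) < c}"
  have finU: "finite (L ` U)" using fin unfolding U_def by simp
  have neU: "L ` U \<noteq> {}" using False unfolding U_def by simp
  have "Min (L ` U) \<in> L ` U" using finU neU by (rule Min_in)
  then obtain i0 where i0: "i0 \<in> U" "L i0 = Min (L ` U)" by auto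
  have minU: "\<And>i. i \<in> U \<Longrightarrow> L i0 \<le> L i" using i0 finU by auto
  have sub: "{k\<in>K. L k < L i0} \<subseteq> {i\<in>K. real (card {k\<in>K. L k < L i}) < c}"
  proof
    fix k assume k: "k \<in> {k\<in>K. L k < L i0}"
    hence "k \<notin> U" using minU by force
    thus "k \<in> {i\<in>K. real (card {k\<in>K. L k < L i}) < c}" using k unfolding U_def by auto
  qed
  have "c \<le> real (card {k\<in>K. L k < L i0})" using i0(1) unfolding U_def by auto
  also have "\<dots> \<le> real (card {i\<in>K. real (card {k\<in>K. L k < L i}) < c})"
    using card_mono[OF _ sub] fin by simp
  finally show ?thesis .
qed

lemma Xset_perm:
  assumes bij: "bij_betw \<tau> {1..n+1} {1..n+1}" and om: "\<And>k. k \<in> {1..n+1} \<Longrightarrow> \<omega>' k = \<omega> (\<tau> k)"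
  shows "Xset n \<omega>' = Xset n \<omega>"
proof -
  have "Xset n \<omega>' = image_mset (\<lambda>i. fst (\<omega> (\<tau> i))) (mset_set {1..n+1})"
    unfolding Xset_def by (intro image_mset_cong) (simp add: om)
  also have "\<dots> = image_mset (\<lambda>i. fst (\<omega> i)) (image_mset \<tau> (mset_set {1..n+1}))"
    by (simp add: multiset.map_comp comp_def)
  also have "image_mset \<tau> (mset_set {1..n+1}) = mset_set {1..n+1}"
    using bij by (simp add: image_mset_mset_set bij_betw_def)
  finally show ?thesis unfolding Xset_def .
qed

lemma pH_perm:
  assumes bij: "bij_betw \<tau> {1..n+1} {1..n+1}" and om: "\<And>k. k \<in> {1..n+1} \<Longrightarrow> \<omega>' k = \<omega> (\<tau> k)"
    and k: "k \<in> {1..n+1}" and j: "j \<in> {1..n+1}"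
  shows "pH H n \<omega>' k j = pH H n \<omega> (\<tau> k) (\<tau> j)"
proof -
  have X: "Xset n \<omega>' = Xset n \<omega>" by (rule Xset_perm[where \<omega>'=\<omega>' and \<omega>=\<omega>, OF bij om])
  have Hp: "\<And>a b. a \<in> {1..n+1} \<Longrightarrow> b \<in> {1..n+1} \<Longrightarrow> Hij H n \<omega>' a b = Hij H n \<omega> (\<tau> a) (\<tau> b)"
    unfolding Hij_def using X om by simp
  have "(\<Sum>k'\<in>{1..n+1}. Hij H n \<omega>' k k') = (\<Sum>k'\<in>{1..n+1}. Hij H n \<omega> (\<tau> k) (\<tau> k'))"
    using Hp k by (intro sum.cong) auto
  also have "\<dots> = (\<Sum>k'\<in>{1..n+1}. Hij H n \<omega> (\<tau> k) k')"
    by (rule sum.reindex_bij_betw[OF bij])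
  finally show ?thesis unfolding pH_def using Hp k j by simp
qed

definition Lf :: "('x \<Rightarrow> 'x \<Rightarrow> 'x multiset \<Rightarrow> real) \<Rightarrow> ('x \<times> real \<Rightarrow> real) \<Rightarrow> nat
    \<Rightarrow> (nat \<Rightarrow> 'x \<times> real) \<Rightarrow> nat \<Rightarrow> real" where
  "Lf H V n \<omega> i = (\<Sum>j\<in>{1..n+1}. if V (\<omega> j) < V (\<omega> i) then pH H n \<omega> i j else 0)"

lemma Lf_perm:
  assumes bij: "bij_betw \<tau> {1..n+1} {1..n+1}" and om: "\<And>k. k \<in> {1..n+1} \<Longrightarrow> \<omega>' k = \<omega> (\<tau> k)"
    and k: "k \<in> {1..n+1}"
  shows "Lf H V n \<omega>' k = Lf H V n \<omega> (\<tau> k)"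
proof -
  have "Lf H V n \<omega>' k = (\<Sum>j\<in>{1..n+1}. if V (\<omega> (\<tau> j)) < V (\<omega> (\<tau> k)) then pH H n \<omega> (\<tau> k) (\<tau> j) else 0)"
    unfolding Lf_def using pH_perm[where \<omega>'=\<omega>' and \<omega>=\<omega> and H=H, OF bij om k] om k by (intro sum.cong) auto
  also have "\<dots> = Lf H V n \<omega> (\<tau> k)"
    unfolding Lf_def by (rule sum.reindex_bij_betw[OF bij, where g="\<lambda>j. if V (\<omega> j) < V (\<omega> (\<tau> k)) then pH H n \<omega> (\<tau> k) j else 0"])
  finally show ?thesis .
qed

lemma pH_nonneg:
  assumes "\<And>x1 x2 X. 0 \<le> H x1 x2 X"
  shows "0 \<le> pH H n \<omega> i j"
  unfolding pH_def Hij_def using assms by (intro divide_nonneg_nonneg sum_nonneg) auto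

theorem theorem1:
  fixes P :: "('x::euclidean_space \<times> real) measure"
    and V :: "'x \<times> real \<Rightarrow> real"
    and H :: "'x \<Rightarrow> 'x \<Rightarrow> 'x multiset \<Rightarrow> real"
    and A :: "('x \<times> real) multiset \<Rightarrow> 'x \<Rightarrow> real"
    and n :: nat and \<alpha> :: real
  defines "M \<equiv> PiM {1..n+1} (\<lambda>_. P)"
  defines "atil \<equiv> (\<lambda>\<omega>. A (Ztrain n \<omega>) (fst (\<omega> (n+1))))"
  assumes P: "prob_space P" and sets_P: "sets P = sets borel"
    and V_meas: "V \<in> borel_measurable borel" and V_nonneg: "\<And>z. V z \<ge> 0"
    and H_range: "\<And>x1 x2 X. 0 \<le> H x1 x2 X \<and> H x1 x2 X \<le> 1"
    and H_diag: "\<And>x X. H x x X = 1"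
    and H_meas: "\<And>i j. i \<in> {1..n+1} \<Longrightarrow> j \<in> {1..n+1} \<Longrightarrow>
                   (\<lambda>\<omega>. Hij H n \<omega> i j) \<in> borel_measurable M"
    and alpha: "0 < \<alpha>" "\<alpha> < 1"
    and A_range: "\<And>D x. 0 \<le> A D x \<and> A D x \<le> 1"
    and A_meas: "atil \<in> borel_measurable M"
    and A_cond: "\<And>\<omega>. vbar H V n \<omega> (atil \<omega>) = \<infinity> \<or> G2 H V n \<omega> (atil \<omega>) \<alpha>"
  shows "\<alpha> \<le> measure M {\<omega> \<in> space M. ereal (V (\<omega> (n+1))) \<le> vbar H V n \<omega> (atil \<omega>)}"
proof -
  define I where "I = {1..n+1::nat}"
  have finI: "finite I" unfolding I_def by simp
  have cardI: "card I = n+1" unfolding I_def by simp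
  have n1I: "n+1 \<in> I" unfolding I_def by simp
  interpret Pp: prob_space P by (rule P)
  have Mprob: "prob_space M" unfolding M_def by (intro prob_space_PiM P)
  interpret Mp: prob_space M by (rule Mprob)
  have pnn: "\<And>\<omega> i j. 0 \<le> pH H n \<omega> i j" by (rule pH_nonneg) (use H_range in blast)
  have V_measP: "V \<in> borel_measurable P"
    by (subst measurable_cong_sets[OF sets_P refl]) (rule V_meas)
  have Vc_meas: "\<And>j. j \<in> I \<Longrightarrow> (\<lambda>\<omega>. V (\<omega> j)) \<in> borel_measurable M"
    unfolding M_def I_def by (rule measurable_compose[OF measurable_component_singleton[where M="\<lambda>_. P"] V_measP])
  have pH_meas: "\<And>i j. i \<in> I \<Longrightarrow> j \<in> I \<Longrightarrow> (\<lambda>\<omega>. pH H n \<omega> i j) \<in> borel_measurable M"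
    unfolding pH_def using H_meas unfolding I_def by (intro borel_measurable_divide borel_measurable_sum) auto
  have L_meas: "\<And>i. i \<in> I \<Longrightarrow> (\<lambda>\<omega>. Lf H V n \<omega> i) \<in> borel_measurable M"
  proof -
    fix i assume i: "i \<in> I"
    show "(\<lambda>\<omega>. Lf H V n \<omega> i) \<in> borel_measurable M"
      unfolding Lf_def I_def[symmetric]
    proof (intro borel_measurable_sum)
      fix j assume j: "j \<in> I"
      note [measurable] = Vc_meas[OF i] Vc_meas[OF j] pH_meas[OF i j]
      show "(\<lambda>\<omega>. if V (\<omega> j) < V (\<omega> i) then pH H n \<omega> i j else 0) \<in> borel_measurable M"
        by measurable
    qed
  qed
  define c where "c = \<alpha> * real (n+1)"
  define C where "C i = {\<omega> \<in> space M. real (card {k\<in>I. Lf H V n \<omega> k < Lf H V n \<omega> i}) < c}" for i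
  have cnt_eq: "\<And>\<omega> i. real (card {k\<in>I. Lf H V n \<omega> k < Lf H V n \<omega> i})
      = (\<Sum>k\<in>I. if Lf H V n \<omega> k < Lf H V n \<omega> i then 1 else 0)"
    using finI by (simp add: sum.If_cases Int_def)
  have C_sets: "\<And>i. i \<in> I \<Longrightarrow> C i \<in> sets M"
  proof -
    fix i assume i: "i \<in> I"
    have "(\<lambda>\<omega>. (\<Sum>k\<in>I. if Lf H V n \<omega> k < Lf H V n \<omega> i then 1 else 0::real)) \<in> borel_measurable M"
    proof (intro borel_measurable_sum)
      fix k assume k: "k \<in> I"
      note [measurable] = L_meas[OF i] L_meas[OF k]
      show "(\<lambda>\<omega>. if Lf H V n \<omega> k < Lf H V n \<omega> i then 1 else 0::real) \<in> borel_measurable M"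
        by measurable
    qed
    hence "{\<omega> \<in> space M. (\<Sum>k\<in>I. if Lf H V n \<omega> k < Lf H V n \<omega> i then 1 else 0::real) < c} \<in> sets M"
      by measurable
    thus "C i \<in> sets M" unfolding C_def cnt_eq .
  qed
  have Eiff: "\<And>\<omega> a. ereal (V (\<omega> (n+1))) \<le> vbar H V n \<omega> a \<longleftrightarrow> Lf H V n \<omega> (n+1) < a"
    unfolding vbar_def
    by (subst quantile_ge_iff) (auto simp: pnn Lf_def intro!: sum.cong arg_cong2[where f="(<)"])
  have Viff: "\<And>\<omega> a i vb. ereal (V (\<omega> i)) \<le> vstar H V n \<omega> a i vb \<longleftrightarrow>
      (\<Sum>j\<in>I. if (if j = n+1 then vb else ereal (V (\<omega> j))) < ereal (V (\<omega> i)) then pH H n \<omega> i j else 0) < a"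
    unfolding vstar_def I_def by (subst quantile_ge_iff) (auto simp: pnn)
  define E where "E = {\<omega> \<in> space M. ereal (V (\<omega> (n+1))) \<le> vbar H V n \<omega> (atil \<omega>)}"
  have E_eq: "E = {\<omega> \<in> space M. Lf H V n \<omega> (n+1) < atil \<omega>}"
    unfolding E_def using Eiff by simp
  have E_sets: "E \<in> sets M"
  proof -
    note [measurable] = L_meas[OF n1I] A_meas
    show ?thesis unfolding E_eq by measurable
  qed
  have sub: "C (n+1) \<subseteq> E"
  proof
    fix \<omega> assume \<omega>C: "\<omega> \<in> C (n+1)"
    hence \<omega>M: "\<omega> \<in> space M" unfolding C_def by simp
    show "\<omega> \<in> E"
    proof (rule ccontr)
      assume nE: "\<omega> \<notin> E"
      define vb where "vb = vbar H V n \<omega> (atil \<omega>)"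
      have vbl: "vb < ereal (V (\<omega> (n+1)))" using nE \<omega>M unfolding E_def vb_def by auto
      hence "vb \<noteq> \<infinity>" by auto
      hence G: "G2 H V n \<omega> (atil \<omega>) \<alpha>" using A_cond unfolding vb_def by blast
      have aL: "atil \<omega> \<le> Lf H V n \<omega> (n+1)" using nE \<omega>M Eiff unfolding E_def by force
      have key: "\<And>i. i \<in> {1..n} \<Longrightarrow> ereal (V (\<omega> i)) \<le> vstar H V n \<omega> (atil \<omega>) i vb \<Longrightarrow>
                   Lf H V n \<omega> i < Lf H V n \<omega> (n+1)"
      proof -
        fix i assume i: "i \<in> {1..n}" and hv: "ereal (V (\<omega> i)) \<le> vstar H V n \<omega> (atil \<omega>) i vb"
        have S: "(\<Sum>j\<in>I. if (if j = n+1 then vb else ereal (V (\<omega> j))) < ereal (V (\<omega> i)) then pH H n \<omega> i j else 0) < atil \<omega>"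
          using hv Viff by blast
        have "Lf H V n \<omega> i \<le> (\<Sum>j\<in>I. if (if j = n+1 then vb else ereal (V (\<omega> j))) < ereal (V (\<omega> i)) then pH H n \<omega> i j else 0)"
          unfolding Lf_def I_def[symmetric]
        proof (rule sum_mono)
          fix j assume "j \<in> I"
          show "(if V (\<omega> j) < V (\<omega> i) then pH H n \<omega> i j else 0)
              \<le> (if (if j = n+1 then vb else ereal (V (\<omega> j))) < ereal (V (\<omega> i)) then pH H n \<omega> i j else 0)"
          proof (cases "j = n+1")
            case True
            show ?thesis
            proof (cases "V (\<omega> j) < V (\<omega> i)")
              case True2: True
              hence "vb < ereal (V (\<omega> i))" using vbl True
                by (metis ereal_less_eq(3) less_le_not_le order.strict_trans)
              thus ?thesis using True pnn by simp
            next
              case False thus ?thesis using pnn by simp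
            qed
          qed simp
        qed
        thus "Lf H V n \<omega> i < Lf H V n \<omega> (n+1)" using S aL by linarith
      qed
      have "(\<Sum>i\<in>{1..n}. if ereal (V (\<omega> i)) \<le> vstar H V n \<omega> (atil \<omega>) i vb then 1 else 0::real)
          \<le> (\<Sum>i\<in>{1..n}. if Lf H V n \<omega> i < Lf H V n \<omega> (n+1) then 1 else 0::real)"
        by (rule sum_mono) (use key in auto)
      also have "\<dots> \<le> (\<Sum>k\<in>I. if Lf H V n \<omega> k < Lf H V n \<omega> (n+1) then 1 else 0::real)"
        by (rule sum_mono2) (auto simp: I_def)
      also have "\<dots> < c" using \<omega>C unfolding C_def cnt_eq by simp
      finally have lt: "(\<Sum>i\<in>{1..n}. if ereal (V (\<omega> i)) \<le> vstar H V n \<omega> (atil \<omega>) i vb then 1 else 0::real) < c" .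
      have "\<alpha> \<le> 1 / real (n+1) * (\<Sum>i\<in>{1..n}. if ereal (V (\<omega> i)) \<le> vstar H V n \<omega> (atil \<omega>) i vb then 1 else 0)"
        using G unfolding G2_def Let_def vb_def by blast
      hence "c \<le> (\<Sum>i\<in>{1..n}. if ereal (V (\<omega> i)) \<le> vstar H V n \<omega> (atil \<omega>) i vb then 1 else 0::real)"
        unfolding c_def by (simp add: field_simps)
      thus False using lt by simp
    qed
  qed
  have sym: "\<And>i. i \<in> I \<Longrightarrow> measure M (C i) = measure M (C (n+1))"
  proof -
    fix i assume i: "i \<in> I"
    define \<tau> where "\<tau> k = (if k = i then n+1 else if k = n+1 then i else k)" for k
    have bij: "bij_betw \<tau> I I"
      by (rule bij_betw_byWitness[where f'=\<tau>]) (use i in \<open>auto simp: \<tau>_def I_def\<close>)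
    have \<tau>I: "\<And>k. k \<in> I \<Longrightarrow> \<tau> k \<in> I" using bij bij_betwE by blast
    define f where "f \<omega> = (\<lambda>k\<in>I. \<omega> (\<tau> k))" for \<omega> :: "nat \<Rightarrow> 'x \<times> real"
    have distr: "distr M M f = M"
      unfolding M_def f_def I_def
      using distr_PiM_reindex[where K="{1..n+1}" and I="{1..n+1}" and M="\<lambda>_. P" and f=\<tau>] P bij \<tau>I
      unfolding I_def bij_betw_def by auto
    have fmeas: "f \<in> measurable M M"
      unfolding f_def M_def I_def
      by (rule measurable_restrict) (rule measurable_component_singleton, use \<tau>I in \<open>simp add: I_def\<close>)
    have "measure M (C (n+1)) = measure (distr M M f) (C (n+1))" by (simp add: distr)
    also have "\<dots> = measure M (f -` C (n+1) \<inter> space M)"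
      by (rule measure_distr[OF fmeas C_sets[OF n1I]])
    also have "f -` C (n+1) \<inter> space M = C i"
    proof (intro set_eqI iffI)
      fix \<omega> assume h: "\<omega> \<in> f -` C (n+1) \<inter> space M"
      hence \<omega>M: "\<omega> \<in> space M" by simp
      have Lp: "\<And>k. k \<in> I \<Longrightarrow> Lf H V n (f \<omega>) k = Lf H V n \<omega> (\<tau> k)"
        using Lf_perm[where \<omega>'="f \<omega>" and \<omega>=\<omega> and \<tau>=\<tau> and H=H and V=V and n=n] bij
        unfolding f_def I_def by auto
      have "(\<Sum>k\<in>I. if Lf H V n (f \<omega>) k < Lf H V n (f \<omega>) (n+1) then 1 else 0::real)
          = (\<Sum>k\<in>I. if Lf H V n \<omega> (\<tau> k) < Lf H V n \<omega> i then 1 else 0::real)"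
        using Lp n1I by (intro sum.cong) (auto simp: \<tau>_def)
      also have "\<dots> = (\<Sum>k\<in>I. if Lf H V n \<omega> k < Lf H V n \<omega> i then 1 else 0::real)"
        by (rule sum.reindex_bij_betw[OF bij, where g="\<lambda>k. if Lf H V n \<omega> k < Lf H V n \<omega> i then 1 else 0::real"])
      finally show "\<omega> \<in> C i" using h \<omega>M unfolding C_def cnt_eq by simp
    next
      fix \<omega> assume h: "\<omega> \<in> C i"
      hence \<omega>M: "\<omega> \<in> space M" unfolding C_def by simp
      have fM: "f \<omega> \<in> space M" using measurable_space[OF fmeas \<omega>M] .
      have Lp: "\<And>k. k \<in> I \<Longrightarrow> Lf H V n (f \<omega>) k = Lf H V n \<omega> (\<tau> k)"
        using Lf_perm[where \<omega>'="f \<omega>" and \<omega>=\<omega> and \<tau>=\<tau> and H=H and V=V and n=n] bij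
        unfolding f_def I_def by auto
      have "(\<Sum>k\<in>I. if Lf H V n (f \<omega>) k < Lf H V n (f \<omega>) (n+1) then 1 else 0::real)
          = (\<Sum>k\<in>I. if Lf H V n \<omega> (\<tau> k) < Lf H V n \<omega> i then 1 else 0::real)"
        using Lp n1I by (intro sum.cong) (auto simp: \<tau>_def)
      also have "\<dots> = (\<Sum>k\<in>I. if Lf H V n \<omega> k < Lf H V n \<omega> i then 1 else 0::real)"
        by (rule sum.reindex_bij_betw[OF bij, where g="\<lambda>k. if Lf H V n \<omega> k < Lf H V n \<omega> i then 1 else 0::real"])
      finally show "\<omega> \<in> f -` C (n+1) \<inter> space M" using h \<omega>M fM unfolding C_def cnt_eq by simp
    qed
    finally show "measure M (C i) = measure M (C (n+1))" by simp
  qed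
  have cI: "c \<le> real (card I)" unfolding c_def cardI using alpha by simp
  have ind_sum: "\<And>\<omega>. \<omega> \<in> space M \<Longrightarrow> (\<Sum>i\<in>I. indicator (C i) \<omega>) = real (card {i\<in>I. \<omega> \<in> C i})"
    using finI by (simp add: indicator_def sum.If_cases Int_def)
  have intC: "\<And>i. i \<in> I \<Longrightarrow> integrable M (indicator (C i) :: _ \<Rightarrow> real)"
    using C_sets by (auto intro!: integrable_indicator simp: Mp.emeasure_eq_measure)
  have "c \<le> (\<integral>\<omega>. (\<Sum>i\<in>I. indicator (C i) \<omega>) \<partial>M)"
  proof (rule Mp.integral_ge_const)
    show "AE \<omega> in M. c \<le> (\<Sum>i\<in>I. indicator (C i) \<omega>)"
    proof (rule AE_I2)
      fix \<omega> assume \<omega>M: "\<omega> \<in> space M"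
      have "{i\<in>I. \<omega> \<in> C i} = {i\<in>I. real (card {k\<in>I. Lf H V n \<omega> k < Lf H V n \<omega> i}) < c}"
        using \<omega>M unfolding C_def by auto
      thus "c \<le> (\<Sum>i\<in>I. indicator (C i) \<omega>)"
        using ind_sum[OF \<omega>M] count_lemma[OF finI cI, of "Lf H V n \<omega>"] by simp
    qed
    show "integrable M (\<lambda>\<omega>. \<Sum>i\<in>I. indicator (C i) \<omega> :: real)"
      using intC by (intro Bochner_Integration.integrable_sum) auto
  qed
  also have "\<dots> = (\<Sum>i\<in>I. \<integral>\<omega>. indicator (C i) \<omega> \<partial>M)"
    using intC by (intro Bochner_Integration.integral_sum) auto
  also have "\<dots> = (\<Sum>i\<in>I. measure M (C i))"
    using C_sets by (intro sum.cong) (auto simp: sets.Int_space_eq2)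
  also have "\<dots> = real (n+1) * measure M (C (n+1))"
    using sym cardI by simp
  finally have "\<alpha> \<le> measure M (C (n+1))" unfolding c_def by simp
  also have "\<dots> \<le> measure M E" by (rule Mp.finite_measure_mono[OF sub E_sets])
  finally show ?thesis unfolding E_def .
qed

end
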